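(* Consider a base station whose users are partitioned into groups $\mathcal{U}_k$, $k\in\mathcal{K}$, where all users of group $k$ are assigned the common attenuation $\ell_k>0$ (group $\mathcal{U}_k$ consists of users $u$ with $|\ell_u-\ell_k|\le\varepsilon_\ell$). User $u$ has traffic demand $T_u>0$, and $T_k=\sum_{u\in\mathcal{U}_k}T_u$. Let constants $g,N_0,\Gamma>0$, $c\in(0,1)$ and a total bandwidth $W>0$ be given. Group-level problem: maximize $\mathit{EE}=\frac{c\sum_k T_k}{\sum_k P_k}$ over $(W_k,P_k)_{k\in\mathcal{K}}$ subject to $P_k=\frac{gN_0\Gamma}{\ell_k}\left(2^{T_k/W_k}-1\right)W_k$ and $\sum_{k\in\mathcal{K}}W_k=W$. Given a solution $(W_k,P_k)_{k}$ of this problem, the optimal allocation of bandwidth $w_u$ and power $p_u=\frac{gN_0\Gamma}{\ell_k}(2^{T_u/w_u}-1)w_u$ to an individual user $u\in\mathcal{U}_k$ (with $\sum_{u\in\mathcal{U}_k}w_u=W_k$) is $w_u=W_k\frac{T_u}{T_k}$, and the power spectral density $\delta p_u\triangleq p_u/w_u$ is the same for all users of the group and equal to $\delta P_k\triangleq P_k/W_k$.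
   Context: Model: downlink OFDMA single cell with Rayleigh fading; $p_u$ is the minimum transmit power ensuring the outage condition $\mathbb{P}(C_u\ge T_u)=c$ with $C_u=w_u\log_2(1+\mathit{SNR}_u/\Gamma)$, $\mathit{SNR}_u=p_uh_f\ell_u/(w_uN_0)$, $h_f$ exponential with mean $1/\tau$, $g=\tau/\ln(1/c)$. $W_k=\sum_{u\in\mathcal{U}_k}w_u$, $P_k=\sum_{u\in\mathcal{U}_k}p_u$. *)

theory Defs
  imports Complex_Main
begin

definition req_power :: "real \<Rightarrow> real \<Rightarrow> real \<Rightarrow> real \<Rightarrow> real \<Rightarrow> real \<Rightarrow> real" where
  "req_power g N0 Gam l t w = g * N0 * Gam / l * (2 powr (t / w) - 1) * w"

definition group_traffic :: "('k \<Rightarrow> 'u set) \<Rightarrow> ('u \<Rightarrow> real) \<Rightarrow> 'k \<Rightarrow> real" where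
  "group_traffic U T k = (\<Sum>u\<in>U k. T u)"

definition group_feasible ::
  "real \<Rightarrow> real \<Rightarrow> real \<Rightarrow> real \<Rightarrow> 'k set \<Rightarrow> ('k \<Rightarrow> 'u set) \<Rightarrow> ('k \<Rightarrow> real) \<Rightarrow> ('u \<Rightarrow> real)
   \<Rightarrow> ('k \<Rightarrow> real) \<Rightarrow> ('k \<Rightarrow> real) \<Rightarrow> bool" where
  "group_feasible g N0 Gam W K U ell T Wk Pk \<longleftrightarrow>
     (\<forall>k\<in>K. 0 < Wk k \<and> Pk k = req_power g N0 Gam (ell k) (group_traffic U T k) (Wk k))
     \<and> (\<Sum>k\<in>K. Wk k) = W"

definition group_EE :: "real \<Rightarrow> 'k set \<Rightarrow> ('k \<Rightarrow> 'u set) \<Rightarrow> ('u \<Rightarrow> real) \<Rightarrow> ('k \<Rightarrow> real) \<Rightarrow> real" where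
  "group_EE c K U T Pk = c * (\<Sum>k\<in>K. group_traffic U T k) / (\<Sum>k\<in>K. Pk k)"

definition group_optimal ::
  "real \<Rightarrow> real \<Rightarrow> real \<Rightarrow> real \<Rightarrow> real \<Rightarrow> 'k set \<Rightarrow> ('k \<Rightarrow> 'u set) \<Rightarrow> ('k \<Rightarrow> real) \<Rightarrow> ('u \<Rightarrow> real)
   \<Rightarrow> ('k \<Rightarrow> real) \<Rightarrow> ('k \<Rightarrow> real) \<Rightarrow> bool" where
  "group_optimal c g N0 Gam W K U ell T Wk Pk \<longleftrightarrow>
     group_feasible g N0 Gam W K U ell T Wk Pk \<and>
     (\<forall>Wk' Pk'. group_feasible g N0 Gam W K U ell T Wk' Pk' \<longrightarrow>
        group_EE c K U T Pk' \<le> group_EE c K U T Pk)"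

definition user_feasible :: "'k set \<Rightarrow> ('k \<Rightarrow> 'u set) \<Rightarrow> ('k \<Rightarrow> real) \<Rightarrow> ('u \<Rightarrow> real) \<Rightarrow> bool" where
  "user_feasible K U Wk w \<longleftrightarrow>
     (\<forall>k\<in>K. (\<forall>u\<in>U k. 0 < w u) \<and> (\<Sum>u\<in>U k. w u) = Wk k)"

definition user_power ::
  "real \<Rightarrow> real \<Rightarrow> real \<Rightarrow> ('k \<Rightarrow> real) \<Rightarrow> ('u \<Rightarrow> real) \<Rightarrow> 'k \<Rightarrow> ('u \<Rightarrow> real) \<Rightarrow> 'u \<Rightarrow> real" where
  "user_power g N0 Gam ell T k w u = req_power g N0 Gam (ell k) (T u) (w u)"

definition user_EE ::
  "real \<Rightarrow> real \<Rightarrow> real \<Rightarrow> real \<Rightarrow> 'k set \<Rightarrow> ('k \<Rightarrow> 'u set) \<Rightarrow> ('k \<Rightarrow> real) \<Rightarrow> ('u \<Rightarrow> real)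
   \<Rightarrow> ('u \<Rightarrow> real) \<Rightarrow> real" where
  "user_EE c g N0 Gam K U ell T w =
     c * (\<Sum>k\<in>K. \<Sum>u\<in>U k. T u) / (\<Sum>k\<in>K. \<Sum>u\<in>U k. user_power g N0 Gam ell T k w u)"

definition user_optimal ::
  "real \<Rightarrow> real \<Rightarrow> real \<Rightarrow> real \<Rightarrow> 'k set \<Rightarrow> ('k \<Rightarrow> 'u set) \<Rightarrow> ('k \<Rightarrow> real) \<Rightarrow> ('u \<Rightarrow> real)
   \<Rightarrow> ('k \<Rightarrow> real) \<Rightarrow> ('u \<Rightarrow> real) \<Rightarrow> bool" where
  "user_optimal c g N0 Gam K U ell T Wk w \<longleftrightarrow>
     user_feasible K U Wk w \<and>
     (\<forall>w'. user_feasible K U Wk w' \<longrightarrow>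
        user_EE c g N0 Gam K U ell T w' \<le> user_EE c g N0 Gam K U ell T w)"

end

theory Submission imports Defs begin

lemma exp_tan: "1 + y \<le> exp (y::real)" "y \<noteq> 0 \<Longrightarrow> 1 + y < exp y"
  using exp_ge_add_one_self apply blast
  using exp_minus_greater[of "-y"] by simp

lemma pow_tan:
  fixes x x0 :: real
  shows "2 powr x0 + 2 powr x0 * ln 2 * (x - x0) \<le> 2 powr x"
    and "x \<noteq> x0 \<Longrightarrow> 2 powr x0 + 2 powr x0 * ln 2 * (x - x0) < 2 powr x"
proof -
  have e: "2 powr x = 2 powr x0 * exp ((x - x0) * ln 2)"
    by (simp add: powr_def exp_add[symmetric] algebra_simps)
  have p: "0 < (2::real) powr x0" by simp
  have l: "0 < ln (2::real)" by simp
  show "2 powr x0 + 2 powr x0 * ln 2 * (x - x0) \<le> 2 powr x"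
    unfolding e using mult_left_mono[OF exp_tan(1)[of "(x - x0) * ln 2"], of "2 powr x0"] p
    by (simp add: algebra_simps)
  assume "x \<noteq> x0"
  then have "(x - x0) * ln 2 \<noteq> 0" using l by simp
  from exp_tan(2)[OF this] p
  show "2 powr x0 + 2 powr x0 * ln 2 * (x - x0) < 2 powr x"
    unfolding e using mult_strict_left_mono[OF exp_tan(2)[OF \<open>(x - x0) * ln 2 \<noteq> 0\<close>] p]
    by (simp add: algebra_simps)
qed

lemma grp:
  fixes S :: "'u set" and w T :: "'u \<Rightarrow> real"
  assumes fin: "finite S" and ne: "S \<noteq> {}" and wp: "\<And>u. u \<in> S \<Longrightarrow> 0 < w u"
    and Tp: "\<And>u. u \<in> S \<Longrightarrow> 0 < T u" and sw: "(\<Sum>u\<in>S. w u) = Wk"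
  defines "Tk \<equiv> (\<Sum>u\<in>S. T u)"
  shows "Wk * (2 powr (Tk / Wk) - 1) \<le> (\<Sum>u\<in>S. w u * (2 powr (T u / w u) - 1))"
    and "(\<Sum>u\<in>S. w u * (2 powr (T u / w u) - 1)) = Wk * (2 powr (Tk / Wk) - 1)
         \<longleftrightarrow> (\<forall>u\<in>S. w u = Wk * T u / Tk)"
proof -
  define x0 where "x0 = Tk / Wk"
  define b where "b = (2::real) powr x0"
  define D where "D = b * ln 2"
  have Wkp: "0 < Wk" using sw wp ne fin by (metis sum_pos)
  have Tkp: "0 < Tk" unfolding Tk_def using Tp ne fin by (metis sum_pos)
  define h where "h u = w u * (2 powr (T u / w u) - 1) - (w u * (b - 1) + D * (T u - x0 * w u))" for u
  have hnn: "0 \<le> h u" if "u \<in> S" for u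
  proof -
    have "w u * (b + D * (T u / w u - x0)) \<le> w u * 2 powr (T u / w u)"
      using mult_left_mono[OF pow_tan(1)[of x0 "T u / w u"], of "w u"] wp[OF that]
      unfolding b_def D_def by simp
    then show ?thesis unfolding h_def using wp[OF that] by (simp add: algebra_simps)
  qed
  have hpos: "0 < h u" if "u \<in> S" "T u / w u \<noteq> x0" for u
  proof -
    have "w u * (b + D * (T u / w u - x0)) < w u * 2 powr (T u / w u)"
      using mult_strict_left_mono[OF pow_tan(2)[OF that(2)], of "w u"] wp[OF that(1)]
      unfolding b_def D_def by simp
    then show ?thesis unfolding h_def using wp[OF that(1)] by (simp add: algebra_simps)
  qed
  have "(\<Sum>u\<in>S. h u) = (\<Sum>u\<in>S. w u * (2 powr (T u / w u) - 1)) - (Wk * (b - 1) + D * (Tk - x0 * Wk))"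
    unfolding h_def Tk_def sw[symmetric]
    by (simp add: sum_subtractf sum.distrib sum_distrib_left sum_distrib_right algebra_simps)
  also have "D * (Tk - x0 * Wk) = 0" unfolding x0_def using Wkp by simp
  finally have hs: "(\<Sum>u\<in>S. h u) = (\<Sum>u\<in>S. w u * (2 powr (T u / w u) - 1)) - Wk * (2 powr (Tk / Wk) - 1)"
    unfolding b_def x0_def by simp
  have "0 \<le> (\<Sum>u\<in>S. h u)" using hnn by (simp add: sum_nonneg)
  then show "Wk * (2 powr (Tk / Wk) - 1) \<le> (\<Sum>u\<in>S. w u * (2 powr (T u / w u) - 1))"
    using hs by simp
  have eq: "w u = Wk * T u / Tk \<longleftrightarrow> T u / w u = x0" if "u \<in> S" for u
    using wp[OF that] Tp[OF that] Wkp Tkp unfolding x0_def by (auto simp: field_simps)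
  show "(\<Sum>u\<in>S. w u * (2 powr (T u / w u) - 1)) = Wk * (2 powr (Tk / Wk) - 1)
         \<longleftrightarrow> (\<forall>u\<in>S. w u = Wk * T u / Tk)"
  proof
    assume "(\<Sum>u\<in>S. w u * (2 powr (T u / w u) - 1)) = Wk * (2 powr (Tk / Wk) - 1)"
    then have "(\<Sum>u\<in>S. h u) = 0" using hs by simp
    then have "\<forall>u\<in>S. h u = 0" using sum_nonneg_eq_0_iff[OF fin] hnn by blast
    then show "\<forall>u\<in>S. w u = Wk * T u / Tk" using hpos eq by fastforce
  next
    assume a: "\<forall>u\<in>S. w u = Wk * T u / Tk"
    have "\<forall>u\<in>S. h u = 0"
    proof
      fix u assume u: "u \<in> S"
      then have "T u / w u = x0" using a eq by blast
      then have "T u = x0 * w u" using wp[OF u] by (simp add: field_simps)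
      then show "h u = 0" unfolding h_def b_def using \<open>T u / w u = x0\<close> by simp
    qed
    then show "(\<Sum>u\<in>S. w u * (2 powr (T u / w u) - 1)) = Wk * (2 powr (Tk / Wk) - 1)"
      using hs by simp
  qed
qed
theorem theorem2:
  fixes K :: "'k set" and U :: "'k \<Rightarrow> 'u set"
    and ell :: "'k \<Rightarrow> real" and ell_u :: "'u \<Rightarrow> real" and eps :: real
    and T :: "'u \<Rightarrow> real"
    and g N0 Gam c W :: real
    and Wk Pk :: "'k \<Rightarrow> real"
  assumes finK: "finite K"
    and finU: "\<And>k. k \<in> K \<Longrightarrow> finite (U k)"
    and neU: "\<And>k. k \<in> K \<Longrightarrow> U k \<noteq> {}"
    and disj: "\<And>k k'. k \<in> K \<Longrightarrow> k' \<in> K \<Longrightarrow> k \<noteq> k' \<Longrightarrow> U k \<inter> U k' = {}"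
    and ell_pos: "\<And>k. k \<in> K \<Longrightarrow> 0 < ell k"
    and grouping: "\<And>k u. k \<in> K \<Longrightarrow> u \<in> U k \<Longrightarrow> \<bar>ell_u u - ell k\<bar> \<le> eps"
    and T_pos: "\<And>u. 0 < T u"
    and g_pos: "0 < g" and N0_pos: "0 < N0" and Gam_pos: "0 < Gam"
    and c_range: "0 < c" "c < 1"
    and W_pos: "0 < W"
    and sol: "group_optimal c g N0 Gam W K U ell T Wk Pk"
  shows "(\<forall>w. user_optimal c g N0 Gam K U ell T Wk w \<longleftrightarrow>
              (\<forall>k\<in>K. \<forall>u\<in>U k. w u = Wk k * T u / group_traffic U T k))
       \<and> (\<forall>k\<in>K. \<forall>u\<in>U k.
            let w = (\<lambda>v. Wk k * T v / group_traffic U T k)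
            in user_power g N0 Gam ell T k w u / w u = Pk k / Wk k)"
proof -
  define a where "a = g * N0 * Gam"
  have ap: "0 < a" unfolding a_def using g_pos N0_pos Gam_pos by simp
  have gf: "group_feasible g N0 Gam W K U ell T Wk Pk" using sol unfolding group_optimal_def by blast
  have Wkp: "\<And>k. k \<in> K \<Longrightarrow> 0 < Wk k" and Pkd: "\<And>k. k \<in> K \<Longrightarrow> Pk k = req_power g N0 Gam (ell k) (group_traffic U T k) (Wk k)"
    using gf unfolding group_feasible_def by auto
  have gtp: "\<And>k. k \<in> K \<Longrightarrow> 0 < group_traffic U T k"
    unfolding group_traffic_def using finU neU T_pos by (simp add: sum_pos)
  define gs where "gs k w = (\<Sum>u\<in>U k. user_power g N0 Gam ell T k w u)" for k w
  define mv where "mv k = a / ell k * (Wk k * (2 powr (group_traffic U T k / Wk k) - 1))" for k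
  have gs_eq: "gs k w = a / ell k * (\<Sum>u\<in>U k. w u * (2 powr (T u / w u) - 1))" for k w
    unfolding gs_def user_power_def req_power_def a_def sum_distrib_left
    by (rule sum.cong) auto
  have F1: "mv k \<le> gs k w" "gs k w = mv k \<longleftrightarrow> (\<forall>u\<in>U k. w u = Wk k * T u / group_traffic U T k)"
    if "user_feasible K U Wk w" "k \<in> K" for k w
  proof -
    have wp: "\<And>u. u \<in> U k \<Longrightarrow> 0 < w u" and sw: "(\<Sum>u\<in>U k. w u) = Wk k"
      using that unfolding user_feasible_def by auto
    note G = grp[of "U k" w T "Wk k", OF finU[OF that(2)] neU[OF that(2)] wp T_pos sw]
    have c: "0 < a / ell k" using ap ell_pos[OF that(2)] by simp
    show "mv k \<le> gs k w" unfolding mv_def gs_eq group_traffic_def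
      using mult_left_mono[OF G(1), of "a / ell k"] c by (simp only: group_traffic_def)
    show "gs k w = mv k \<longleftrightarrow> (\<forall>u\<in>U k. w u = Wk k * T u / group_traffic U T k)"
      unfolding mv_def gs_eq group_traffic_def using G(2) c ap ell_pos[OF that(2)] by simp
  qed
  have mvp: "0 < mv k" if "k \<in> K" for k
  proof -
    have "1 < (2::real) powr (group_traffic U T k / Wk k)"
      using gtp[OF that] Wkp[OF that] by simp
    then show ?thesis unfolding mv_def using ap ell_pos[OF that] Wkp[OF that] by simp
  qed
  have Pkmv: "Pk k = mv k" if "k \<in> K" for k
    using Pkd[OF that] unfolding req_power_def mv_def a_def by simp
  have EEeq: "user_EE c g N0 Gam K U ell T w = c * (\<Sum>k\<in>K. \<Sum>u\<in>U k. T u) / (\<Sum>k\<in>K. gs k w)" for w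
    unfolding user_EE_def gs_def by simp
  define w0 where "w0 v = (let k = (SOME k. k \<in> K \<and> v \<in> U k) in Wk k * T v / group_traffic U T k)" for v
  have w0u: "w0 u = Wk k * T u / group_traffic U T k" if "k \<in> K" "u \<in> U k" for k u
  proof -
    have "(SOME k. k \<in> K \<and> u \<in> U k) = k"
      by (rule some_equality) (use that disj in auto)
    then show ?thesis unfolding w0_def by simp
  qed
  have feas_char: "user_feasible K U Wk w" if "\<forall>k\<in>K. \<forall>u\<in>U k. w u = Wk k * T u / group_traffic U T k" for w
    unfolding user_feasible_def
  proof (rule ballI, rule conjI)
    fix k assume k: "k \<in> K"
    show "\<forall>u\<in>U k. 0 < w u"
    proof
      fix u assume "u \<in> U k"
      then have "w u = Wk k * T u / group_traffic U T k" using that k by blast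
      then show "0 < w u" using Wkp[OF k] gtp[OF k] T_pos[of u] by simp
    qed
    have "(\<Sum>u\<in>U k. w u) = (\<Sum>u\<in>U k. Wk k / group_traffic U T k * T u)"
      using that k by (intro sum.cong) auto
    also have "\<dots> = Wk k" using gtp[OF k] unfolding sum_distrib_left[symmetric] group_traffic_def
      by simp
    finally show "(\<Sum>u\<in>U k. w u) = Wk k" .
  qed
  have part1: "user_optimal c g N0 Gam K U ell T Wk w \<longleftrightarrow>
              (\<forall>k\<in>K. \<forall>u\<in>U k. w u = Wk k * T u / group_traffic U T k)" for w
  proof (cases "K = {}")
    case True
    then show ?thesis unfolding user_optimal_def user_feasible_def user_EE_def by simp
  next
    case Kne: False
    have numpos: "0 < c * (\<Sum>k\<in>K. \<Sum>u\<in>U k. T u)"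
    proof -
      have "0 < (\<Sum>k\<in>K. group_traffic U T k)" using sum_pos[OF finK Kne] gtp by blast
      then show ?thesis using c_range(1) unfolding group_traffic_def by simp
    qed
    have Gpos: "0 < (\<Sum>k\<in>K. mv k)" using sum_pos[OF finK Kne] mvp by blast
    show ?thesis
    proof
      assume uo: "user_optimal c g N0 Gam K U ell T Wk w"
      then have fw: "user_feasible K U Wk w" unfolding user_optimal_def by blast
      have f0: "user_feasible K U Wk w0" using feas_char w0u by blast
      have "user_EE c g N0 Gam K U ell T w0 \<le> user_EE c g N0 Gam K U ell T w"
        using uo f0 unfolding user_optimal_def by blast
      have g0: "(\<Sum>k\<in>K. gs k w0) = (\<Sum>k\<in>K. mv k)"
        using F1(2)[OF f0] w0u by (intro sum.cong) auto
      have "(\<Sum>k\<in>K. mv k) \<le> (\<Sum>k\<in>K. gs k w)" using F1(1)[OF fw] by (intro sum_mono) auto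
      have "(\<Sum>k\<in>K. gs k w) \<le> (\<Sum>k\<in>K. mv k)"
      proof (rule ccontr)
        assume "\<not> (\<Sum>k\<in>K. gs k w) \<le> (\<Sum>k\<in>K. mv k)"
        then have lt: "(\<Sum>k\<in>K. mv k) < (\<Sum>k\<in>K. gs k w)" by simp
        have "c * (\<Sum>k\<in>K. \<Sum>u\<in>U k. T u) / (\<Sum>k\<in>K. gs k w) < c * (\<Sum>k\<in>K. \<Sum>u\<in>U k. T u) / (\<Sum>k\<in>K. mv k)"
          using divide_strict_left_mono[OF lt numpos] Gpos lt by simp
        then show False using \<open>user_EE c g N0 Gam K U ell T w0 \<le> user_EE c g N0 Gam K U ell T w\<close> g0
          unfolding EEeq by simp
      qed
      then have le0: "(\<Sum>k\<in>K. gs k w - mv k) \<le> 0" by (simp add: sum_subtractf)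
      have nn: "\<And>k. k \<in> K \<Longrightarrow> 0 \<le> gs k w - mv k" using F1(1)[OF fw] by simp
      have "(\<Sum>k\<in>K. gs k w - mv k) = 0" using le0 sum_nonneg[of K "\<lambda>k. gs k w - mv k", OF nn] by linarith
      moreover have "(\<Sum>k\<in>K. gs k w - mv k) = 0 \<longleftrightarrow> (\<forall>k\<in>K. gs k w - mv k = 0)"
        by (rule sum_nonneg_eq_0_iff[OF finK]) (rule nn)
      ultimately have z: "\<forall>k\<in>K. gs k w - mv k = 0" by blast
      show "\<forall>k\<in>K. \<forall>u\<in>U k. w u = Wk k * T u / group_traffic U T k"
      proof
        fix k assume k: "k \<in> K"
        then have "gs k w = mv k" using z by simp
        then show "\<forall>u\<in>U k. w u = Wk k * T u / group_traffic U T k" using F1(2)[OF fw k] by blast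
      qed
    next
      assume h: "\<forall>k\<in>K. \<forall>u\<in>U k. w u = Wk k * T u / group_traffic U T k"
      have fw: "user_feasible K U Wk w" using feas_char h by blast
      have gw: "(\<Sum>k\<in>K. gs k w) = (\<Sum>k\<in>K. mv k)"
        using F1(2)[OF fw] h by (intro sum.cong) auto
      show "user_optimal c g N0 Gam K U ell T Wk w"
        unfolding user_optimal_def
      proof (intro conjI allI impI fw)
        fix w' assume fw': "user_feasible K U Wk w'"
        have "(\<Sum>k\<in>K. mv k) \<le> (\<Sum>k\<in>K. gs k w')" using F1(1)[OF fw'] by (intro sum_mono) auto
        then show "user_EE c g N0 Gam K U ell T w' \<le> user_EE c g N0 Gam K U ell T w"
        proof -
          have "0 < (\<Sum>k\<in>K. gs k w')" using Gpos \<open>(\<Sum>k\<in>K. mv k) \<le> (\<Sum>k\<in>K. gs k w')\<close> by linarith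
          then have "0 < (\<Sum>k\<in>K. gs k w') * (\<Sum>k\<in>K. mv k)" using Gpos by simp
          from divide_left_mono[OF \<open>(\<Sum>k\<in>K. mv k) \<le> (\<Sum>k\<in>K. gs k w')\<close> _ this, of "c * (\<Sum>k\<in>K. \<Sum>u\<in>U k. T u)"] numpos
          show ?thesis unfolding EEeq gw by simp
        qed
      qed
    qed
  qed
  have part2: "let w = (\<lambda>v. Wk k * T v / group_traffic U T k)
            in user_power g N0 Gam ell T k w u / w u = Pk k / Wk k" if k: "k \<in> K" and u: "u \<in> U k" for k u
  proof -
    have wp: "0 < Wk k * T u / group_traffic U T k" using Wkp[OF k] gtp[OF k] T_pos by simp
    have r: "T u / (Wk k * T u / group_traffic U T k) = group_traffic U T k / Wk k"
      using Wkp[OF k] gtp[OF k] T_pos[of u] by (simp add: field_simps)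
    show ?thesis unfolding Let_def user_power_def req_power_def Pkd[OF k] r
      using wp Wkp[OF k] T_pos[of u] by simp
  qed
  show ?thesis using part1 part2 by blast
qed

end
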